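(* Let $A=(0,0)$, $B=(1,0)$, $C=(1,1)$, $D=(0,1)$ be the vertices of the unit square in $\mathbb{R}^2$. There is no point $P$ lying on a midline of this square, that is, no point of the form $P=(1/2,\,y)$ with $0\le y\le 1$ or $P=(x,\,1/2)$ with $0\le x\le 1$, such that the four Euclidean distances $|PA|$, $|PB|$, $|PC|$, $|PD|$ are all rational numbers.
   Context: The midlines of the square are the segments joining midpoints of opposite sides. Distances are ordinary Euclidean distances. *)

theory Defs
  imports "HOL-Analysis.Analysis"
begin

end

theory Submission
  imports Defs "HOL-Computational_Algebra.Nth_Powers"
begin

lemma coprime_pow_split:
  fixes a b k :: nat
  assumes "coprime a b" "a * b = k ^ n" "a > 0" "b > 0"
  shows "\<exists>r. a = r ^ n" "\<exists>r. b = r ^ n"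
  using is_nth_power_mult_coprime_natD[of a b n] assms
  by (auto simp: is_nth_power_def)

lemma odd_sq_mod4: "odd (n::nat) \<Longrightarrow> n^2 mod 4 = 1"
proof -
  assume "odd n"
  then obtain i where "n = 2*i+1" by (metis oddE)
  then have "n^2 = 4*(i^2+i) + 1" by (simp add: power2_eq_square algebra_simps)
  then show ?thesis by simp
qed

lemma even_sq_mod4: "even (n::nat) \<Longrightarrow> n^2 mod 4 = 0"
proof -
  assume "even n"
  then obtain i where "n = 2*i" by blast
  then have "n^2 = 4*(i^2)" by (simp add: power2_eq_square algebra_simps)
  then show ?thesis by simp
qed

lemma cop4: "odd (n::nat) \<Longrightarrow> coprime 4 n"
proof -
  assume "odd n"
  then have "coprime 2 n" by (simp add: odd_iff_mod_2_eq_one coprime_commute)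
  then have "coprime (2^2) n" by (simp only: coprime_power_left_iff) simp
  then show ?thesis by simp
qed

lemma cop_add: "coprime (a::nat) (b + c*a) \<longleftrightarrow> coprime a b"
  by (metis coprime_iff_gcd_eq_1 gcd_add_mult add.commute)

lemma cop_add1: "coprime (a::nat) (b + a) \<longleftrightarrow> coprime a b"
  using cop_add[of a b 1] by simp

lemma fermat_4_4:
  fixes z :: nat
  shows "x > 0 \<Longrightarrow> y > 0 \<Longrightarrow> x^4 + 4*y^4 \<noteq> z^2"
proof (induction z arbitrary: x y rule: less_induct)
  case (less z)
  show ?case
  proof
    assume eq: "x^4 + 4*y^4 = z^2"
    have zpos: "z > 0" using eq less.prems by (cases z) auto
    show False
    proof (cases "coprime x y")
      case False
      define g where "g = gcd x y"
      have "g \<noteq> 1" using False by (simp add: g_def coprime_iff_gcd_eq_1)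
      moreover have "g > 0" using less.prems g_def by simp
      ultimately have g1: "g > 1" by linarith
      obtain x' where x': "x = g*x'" unfolding g_def by (metis gcd_dvd1 dvdE)
      obtain y' where y': "y = g*y'" unfolding g_def by (metis gcd_dvd2 dvdE)
      have x'p: "x' > 0" using x' less.prems by auto
      have y'p: "y' > 0" using y' less.prems by auto
      have e2: "z^2 = (g^2)^2 * (x'^4 + 4*y'^4)" using eq x' y' by (simp add: algebra_simps power_mult_distrib flip: power_mult)
      then have "(g^2)^2 dvd z^2" by simp
      then have "g^2 dvd z" by (metis pow_divides_pow_iff zero_less_numeral)
      then obtain w where w: "z = g^2 * w" by blast
      have "(g^2)^2 * w^2 = (g^2)^2 * (x'^4 + 4*y'^4)" using e2 w by (simp add: power_mult_distrib)
      then have we: "x'^4 + 4*y'^4 = w^2" using g1 by simp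
      have wp: "w > 0" using w zpos by (cases w) auto
      have "g^2 > 1" using g1 by (metis one_less_power zero_less_numeral)
      then have "w < z" using w wp by simp
      then show False using less.IH[OF _ x'p y'p] we by blast
    next
      case cop: True
      show False
      proof (cases "even x")
        case True
        then obtain x' where x': "x = 2*x'" by blast
        have "z^2 = 4*(4*x'^4 + y^4)" using eq x' by (simp add: power_mult_distrib)
        then have "even (z^2)" by simp
        then have "even z" by simp
        then obtain w where w: "z = 2*w" by blast
        have we: "y^4 + 4*x'^4 = w^2" using eq x' w by (simp add: power_mult_distrib)
        have "w < z" using w zpos by simp
        then show False using less.IH[OF _ less.prems(2)] we x' less.prems by auto
      next
        case xodd: False
        have zodd: "odd z"
        proof -
          have "odd (x^4 + 4*y^4)" using xodd by simp
          then have "odd (z^2)" using eq by simp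
          then show ?thesis by simp
        qed
        have cxz: "coprime x z"
        proof -
          define g where "g = gcd x z"
          have gx: "g dvd x" "g dvd z" unfolding g_def by auto
          have "g dvd z^2" using gx(2) by (metis dvd_mult2 power2_eq_square)
          moreover have "g dvd x^4" using gx(1) by (metis dvd_power dvd_trans zero_less_numeral)
          ultimately have "g dvd 4*y^4" using eq by (metis dvd_add_right_iff)
          moreover have "coprime g (y^4)" using gx(1) cop
            by (metis coprime_divisors dvd_refl coprime_power_right_iff)
          ultimately have g4: "g dvd 4" using coprime_dvd_mult_left_iff by blast
          have godd: "odd g" using gx(1) xodd by (metis dvd_trans)
          have "g \<le> 4" using g4 by (simp add: dvd_imp_le)
          moreover have "g > 0" unfolding g_def using less.prems by simp
          ultimately have "g = 1 \<or> g = 2 \<or> g = 3 \<or> g = 4" by presburger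
          then have "g = 1" using g4 godd by auto
          then show ?thesis unfolding g_def by (simp add: coprime_iff_gcd_eq_1)
        qed
        have "4*y^4 > 0" using less.prems by simp
        then have "x^4 < z^2" using eq by linarith
        then have "(x^2)^2 < z^2" by (simp flip: power_mult)
        then have "x^2 < z" by (rule power_less_imp_less_base) simp
        then obtain k where k: "z = x^2 + k" "k > 0" by (metis less_imp_add_positive)
        have "even k" using k zodd xodd by simp
        then obtain P where P: "k = 2*P" by blast
        have Ppos: "P > 0" using k P by simp
        have "(x^2 + 2*P)^2 = x^4 + 4*y^4" using eq k P by simp
        moreover have "(x^2+2*P)^2 = x^4 + 4*(P*(x^2+P))"
          by (simp add: power2_sum power_mult_distrib algebra_simps flip: power_mult) (simp add: power2_eq_square)
        ultimately have PQ: "P * (x^2 + P) = y^4" by simp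
        have cxP: "coprime x P"
        proof -
          have "coprime x (2*P + x*x)" using cxz k P by (simp add: power2_eq_square add.commute)
          then have "coprime x (2*P)" using cop_add[of x "2*P" x] by simp
          then show ?thesis by simp
        qed
        have cPQ: "coprime P (x^2 + P)"
          using cxP by (simp add: cop_add1 coprime_commute)
        obtain d where d: "P = d^4" using coprime_pow_split(1)[OF cPQ PQ] Ppos by auto
        obtain c where c: "x^2 + P = c^4" using coprime_pow_split(2)[OF cPQ PQ] Ppos by auto
        have dpos: "d > 0" using d Ppos by (cases d) auto
        have cd: "coprime c d" using cPQ c d by (simp add: coprime_commute)
        have zcd: "z = c^4 + d^4" using k P c d by simp
        have deven: "even d"
        proof (rule ccontr)
          assume "odd d"
          then have "odd (d^2)" by simp
          then have "(d^2)^2 mod 4 = 1" by (rule odd_sq_mod4)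
          moreover have "x^2 mod 4 = 1" using xodd by (rule odd_sq_mod4)
          ultimately have "(x^2 + (d^2)^2) mod 4 = 2" by (simp add: mod_add_eq[symmetric])
          then have m2: "(c^2)^2 mod 4 = 2" using c d by (simp flip: power_mult)
          show False
          proof (cases "even (c^2)")
            case True then show False using m2 even_sq_mod4[of "c^2"] by simp
          next
            case False then show False using m2 odd_sq_mod4[of "c^2"] by simp
          qed
        qed
        then obtain e where e: "d = 2*e" by blast
        have epos: "e > 0" using dpos e by simp
        have codd: "odd c" using cd deven
          by (metis coprime_common_divisor_nat dvd_refl even_numeral odd_one)
        have cxc: "coprime x c"
        proof -
          have "coprime x (d^4)" using cxP d by simp
          then have "coprime (x^2) (d^4)" by simp
          then have "coprime (x^2) (d^4 + x^2)" by (simp add: cop_add1)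
          then have "coprime (x^2) (c^4)" using c d by (simp add: add.commute)
          then show ?thesis by simp
        qed
        have "d^4 > 0" using dpos by simp
        then have "x^2 < c^4" using c d by linarith
        then have "x^2 < (c^2)^2" by (simp flip: power_mult)
        then have "x < c^2" by (rule power_less_imp_less_base) simp
        then obtain m where m: "c^2 = x + m" "m > 0" by (metis less_imp_add_positive)
        have "odd (c^2)" using codd by simp
        then have "even m" using m(1) xodd by (metis even_add)
        then obtain R where R: "m = 2*R" by blast
        have Rpos: "R > 0" using m R by simp
        have "(x + 2*R)^2 = (c^2)^2" using m R by simp
        also have "\<dots> = c^4" by (simp flip: power_mult)
        also have "\<dots> = x^2 + 16*e^4" using c d e by (simp add: power_mult_distrib)
        finally have "(x + 2*R)^2 = x^2 + 16*e^4" .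
        moreover have "(x + 2*R)^2 = x^2 + 4*(R*(x+R))"
          by (simp add: power2_sum power_mult_distrib algebra_simps) (simp add: power2_eq_square)
        ultimately have RS: "R * (x + R) = 4*e^4" by simp
        have cRx: "coprime x R"
        proof -
          have "coprime x (c^2)" using cxc by simp
          then have "coprime x (2*R + 1*x)" using m R by (simp add: add.commute)
          then have "coprime x (2*R)" using cop_add[of x "2*R" 1] by simp
          then show ?thesis by simp
        qed
        have cRS: "coprime R (x + R)" using cRx by (simp add: cop_add1 coprime_commute)
        have c2: "c^2 = R + (x + R)" using m R by simp
        have zc: "c < z"
        proof -
          have "c \<le> c^4" using codd by (cases c) (auto simp: self_le_power)
          moreover have "d^4 > 0" using dpos by simp
          ultimately show ?thesis using zcd by linarith
        qed
        have key: "\<exists>g h. g > 0 \<and> h > 0 \<and> c^2 = h^4 + 4*g^4"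
        proof (cases "even R")
          case True
          then have "odd (x + R)" using cRS by (metis coprime_common_divisor_nat dvd_add_left_iff dvd_refl even_numeral odd_one)
          then have "coprime 4 (x + R)" by (rule cop4)
          moreover have "4 dvd R * (x + R)" using RS by simp
          ultimately have "4 dvd R" using coprime_dvd_mult_left_iff by blast
          then obtain R' where R': "R = 4*R'" by blast
          have R'S: "R' * (x + R) = e^4" using RS R' by simp
          have cR'S: "coprime R' (x + R)" using cRS R' by simp
          have R'pos: "R' > 0" using Rpos R' by simp
          obtain g where g: "R' = g^4" using coprime_pow_split(1)[OF cR'S R'S] R'pos Rpos by auto
          obtain h where h: "x + R = h^4" using coprime_pow_split(2)[OF cR'S R'S] R'pos Rpos by auto
          show ?thesis
            by (rule exI[of _ g], rule exI[of _ h]) (use g h R' R'pos Rpos c2 in \<open>auto intro: Nat.gr0I\<close>)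
        next
          case False
          then have "even (x + R)" using RS by (metis even_mult_iff even_numeral)
          moreover have "coprime 4 R" using False by (rule cop4)
          moreover have "4 dvd (x + R) * R" using RS by (simp add: mult.commute)
          ultimately have "4 dvd (x + R)" using coprime_dvd_mult_left_iff by blast
          then obtain S' where S': "x + R = 4*S'" by blast
          have RS': "R * S' = e^4" using RS S' by simp
          have cRS': "coprime R S'" using cRS S' by simp
          have S'pos: "S' > 0" using Rpos S' by simp
          obtain h where h: "R = h^4" using coprime_pow_split(1)[OF cRS' RS'] S'pos Rpos by auto
          obtain g where g: "S' = g^4" using coprime_pow_split(2)[OF cRS' RS'] S'pos Rpos by auto
          show ?thesis
            by (rule exI[of _ g], rule exI[of _ h]) (use g h S' S'pos Rpos c2 in \<open>auto intro: Nat.gr0I\<close>)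
        qed
        then obtain g h where "g > 0" "h > 0" "c^2 = h^4 + 4*g^4" by blast
        then show False using less.IH[OF zc] by metis
      qed
    qed
  qed
qed

lemma rat_sq_nat:
  fixes r :: real
  assumes "r \<in> \<rat>" "r^2 = real N"
  shows "\<exists>k. N = k^2"
proof -
  obtain m n :: nat where mn: "n \<noteq> 0" "\<bar>r\<bar> = real m / real n" "coprime m n"
    using Rats_abs_nat_div_natE[OF assms(1)] by metis
  have "real N = \<bar>r\<bar>^2" using assms(2) by simp
  also have "\<dots> = real m ^ 2 / real n ^ 2" using mn by (simp add: power_divide)
  finally have "real N * real n ^ 2 = real m ^ 2" using mn(1) by (simp add: field_simps)
  then have eq: "N * n^2 = m^2" by (metis of_nat_eq_iff of_nat_mult of_nat_power)
  then have "n^2 dvd m^2" by (metis dvd_triv_right)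
  then have "n dvd m" by (metis pow_divides_pow_iff zero_less_numeral)
  then have "n = 1" using mn(3) by (metis coprime_common_divisor_nat dvd_refl)
  then show ?thesis using eq by auto
qed

lemma not_sq2: "(k::nat)^2 \<noteq> 2"
proof
  assume h: "k^2 = 2"
  show False
  proof (cases "k \<le> 1")
    case True
    then have "k^2 \<le> 1^2" by (rule power_mono) simp
    then show False using h by simp
  next
    case False
    then have "2^2 \<le> k^2" by (intro power_mono) auto
    then show False using h by simp
  qed
qed

lemma midline_main:
  fixes a b y :: real
  assumes ra: "a \<in> \<rat>" and rb: "b \<in> \<rat>"
    and ha: "a^2 = 1/4 + y^2" and hb: "b^2 = 1/4 + (y-1)^2"
  shows False
proof -
  define d where "d = 2*y - 1"
  have "d = a^2 - b^2" using ha hb unfolding d_def by (simp add: power2_eq_square algebra_simps)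
  then have dr: "d \<in> \<rat>" using ra rb by simp
  have a4: "4*a^2 = 1 + (d+1)^2" using ha unfolding d_def by (simp add: power2_eq_square algebra_simps)
  have b4: "4*b^2 = 1 + (d-1)^2" using hb unfolding d_def by (simp add: power2_eq_square algebra_simps)
  have ab: "(4*a*b)^2 = d^4 + 4"
  proof -
    have "(4*a*b)^2 = (4*a^2)*(4*b^2)" by (simp add: power2_eq_square algebra_simps)
    also have "\<dots> = (1 + (d+1)^2) * (1 + (d-1)^2)" using a4 b4 by simp
    also have "\<dots> = d^4 + 4" by (simp add: power2_eq_square algebra_simps power4_eq_xxxx)
    finally show ?thesis .
  qed
  obtain m n :: nat where mn: "n \<noteq> 0" "\<bar>d\<bar> = real m / real n" "coprime m n"
    using Rats_abs_nat_div_natE[OF dr] by metis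
  have d4: "d^4 = real m ^ 4 / real n ^ 4"
  proof -
    have "d^4 = \<bar>d\<bar>^4" by (simp add: power_even_abs)
    then show ?thesis using mn(2) by (simp add: power_divide)
  qed
  define e where "e = 4*a*b*(real n)^2"
  have er: "e \<in> \<rat>" unfolding e_def using ra rb by simp
  have "e^2 = (d^4 + 4) * real n ^ 4" unfolding e_def using ab
    by (simp add: power_mult_distrib flip: power_mult)
  also have "\<dots> = real (m^4 + 4*n^4)" using d4 mn(1) by (simp add: field_simps)
  finally obtain k where k: "m^4 + 4*n^4 = k^2" using rat_sq_nat[OF er] by metis
  show False
  proof (cases "m = 0")
    case False
    then show False using fermat_4_4[of m n k] k mn(1) by auto
  next
    case True
    then have "d = 0" using mn(2) by simp
    then have "(2*a)^2 = real 2" using a4 by (simp add: power_mult_distrib)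
    moreover have "2*a \<in> \<rat>" using ra by simp
    ultimately obtain j :: nat where "2 = j^2" using rat_sq_nat[of "2*a" 2] by blast
    then show False using not_sq2[of j] by simp
  qed
qed

theorem theorem2:
  fixes P :: "real \<times> real"
  assumes "(fst P = 1/2 \<and> 0 \<le> snd P \<and> snd P \<le> 1) \<or> (snd P = 1/2 \<and> 0 \<le> fst P \<and> fst P \<le> 1)"
  shows "\<not> (dist P (0,0) \<in> \<rat> \<and> dist P (1,0) \<in> \<rat> \<and> dist P (1,1) \<in> \<rat> \<and> dist P (0,1) \<in> \<rat>)"
proof
  assume h: "dist P (0,0) \<in> \<rat> \<and> dist P (1,0) \<in> \<rat> \<and> dist P (1,1) \<in> \<rat> \<and> dist P (0,1) \<in> \<rat>"
  obtain p q where P: "P = (p, q)" by (cases P)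
  have d00: "(dist P (0,0))^2 = p^2 + q^2" unfolding P by (simp add: dist_Pair_Pair dist_real_def)
  have d10: "(dist P (1,0))^2 = (p-1)^2 + q^2" unfolding P by (simp add: dist_Pair_Pair dist_real_def)
  have d01: "(dist P (0,1))^2 = p^2 + (q-1)^2" unfolding P by (simp add: dist_Pair_Pair dist_real_def)
  from assms show False
  proof
    assume "fst P = 1/2 \<and> 0 \<le> snd P \<and> snd P \<le> 1"
    then have uu: "p = 1/2" using P by simp
    have "p^2 = 1/4" unfolding uu by (simp add: power2_eq_square)
    then have e1: "(dist P (0,0))^2 = 1/4 + q^2" "(dist P (0,1))^2 = 1/4 + (q-1)^2"
      using d00 d01 by linarith+
    show False using midline_main[OF _ _ e1] h by blast
  next
    assume "snd P = 1/2 \<and> 0 \<le> fst P \<and> fst P \<le> 1"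
    then have uu: "q = 1/2" using P by simp
    have "q^2 = 1/4" unfolding uu by (simp add: power2_eq_square)
    then have e1: "(dist P (0,0))^2 = 1/4 + p^2" "(dist P (1,0))^2 = 1/4 + (p-1)^2"
      using d00 d10 by linarith+
    show False using midline_main[OF _ _ e1] h by blast
  qed
qed

end
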